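(* For every $\varphi\in\Phi_\mathbb{Z}$, $\dim(\varphi)$ is an integer and $$\dim(\varphi)\equiv-\sum_{j=1}^d j\,\mu_{1,j}(\varphi)\pmod{b-1}.$$
   Context: Fix integers $b\ge2$, $d\ge1$. A function $f:\mathbb{R}\to\mathbb{R}\cup\{-\infty\}$ is called strictly increasing if it is nondecreasing and strictly increasing on the set where it is finite. $\Phi$ is the set of $d$-tuples $\varphi=(\varphi_1,\dots,\varphi_d)$ of functions $\mathbb{R}\to\mathbb{R}\cup\{-\infty\}$ such that: (1) $\varphi_1\ge\dots\ge\varphi_d$; (2) each $\varphi_i$ is strictly increasing and right-continuous; (3) for each $i$ there is $q_i\in\mathbb{R}$ such that $\varphi_i$ is finite exactly on $[q_i,+\infty[$, piecewise affine there with derivative $b$ almost everywhere, and $\varphi_i(q)=bq-q_i$ for $q$ large; (4) there exist strictly increasing right-continuous $\psi_1\le\dots\le\psi_d:\mathbb{R}\to\mathbb{R}\cup\{-\infty\}$ with $\#\{i:\varphi_i(q)=\mu\}=\#\{j:\psi_j(\mu)=q\}$ for all $(q,\mu)\in\mathbb{R}^2$ (uniquely determined). $\Phi_\mathbb{Z}$ is the set of $\varphi\in\Phi$ such that each $q_i\in\mathbb{Z}$ and each $\varphi_i$ has all discontinuity points in $\frac1b\mathbb{Z}$. Set $\varphi_i(-\infty)=\psi_j(-\infty)=-\infty$. For $1\le j\le d$, $\mu_{1,j}(\varphi)$ is the infimum of the reals $\mu$ such that either $\varphi_1(\psi_j(\mu))>\mu$, or $\varphi_1(\psi_j(\mu))=\mu$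 and $\#\{i'\le 1:\varphi_{i'}(q)=\mu\}\le\#\{j'\le j:\psi_{j'}(\mu)=q\}$ with $q=\psi_j(\mu)$. With $\mathrm{Leb}$ the Lebesgue measure, $\dim(\varphi):=\sum_{1\le i<i'\le d}\mathrm{Leb}(\varphi_{i'}(\mathbb{R})\setminus\varphi_i(\mathbb{R}))$. *)

theory Defs
  imports "HOL-Analysis.Analysis"
begin

text \<open>Functions R -> R union {-infinity} are modelled as real => ereal never taking the value +infinity.
  Indices run over 1..d.\<close>

definition no_pinf :: "(real \<Rightarrow> ereal) \<Rightarrow> bool" where
  "no_pinf f \<longleftrightarrow> (\<forall>x. f x \<noteq> \<infinity>)"

definition strictly_incr :: "(real \<Rightarrow> ereal) \<Rightarrow> bool" where
  "strictly_incr f \<longleftrightarrow> mono f \<and>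
     (\<forall>x y. x < y \<and> f x \<noteq> -\<infinity> \<and> f y \<noteq> -\<infinity> \<longrightarrow> f x < f y)"

definition right_cont :: "(real \<Rightarrow> ereal) \<Rightarrow> bool" where
  "right_cont f \<longleftrightarrow> (\<forall>x. continuous (at_right x) f)"

text \<open>Condition (3) with given q0: finite exactly on [q0,+inf[, piecewise affine there
  (finitely many break points S, affine of slope b on each piece, hence derivative b a.e.),
  and equal to b q - q0 for q large.\<close>
definition tail_cond :: "nat \<Rightarrow> (real \<Rightarrow> ereal) \<Rightarrow> real \<Rightarrow> bool" where
  "tail_cond b f q0 \<longleftrightarrow>
     (\<forall>x. f x \<noteq> -\<infinity> \<longleftrightarrow> q0 \<le> x) \<and>
     (\<exists>S. finite S \<and>
        (\<forall>x y. q0 < x \<and> x \<le> y \<and> (\<forall>s\<in>S. \<not> (x \<le> s \<and> s \<le> y)) \<longrightarrow>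
               f y = f x + ereal (real b * (y - x)))) \<and>
     (\<exists>Q. \<forall>q\<ge>Q. f q = ereal (real b * q - q0))"

definition conj_family :: "nat \<Rightarrow> (nat \<Rightarrow> real \<Rightarrow> ereal) \<Rightarrow> (nat \<Rightarrow> real \<Rightarrow> ereal) \<Rightarrow> bool" where
  "conj_family d \<phi> \<psi> \<longleftrightarrow>
     (\<forall>j\<in>{1..d}. no_pinf (\<psi> j) \<and> strictly_incr (\<psi> j) \<and> right_cont (\<psi> j)) \<and>
     (\<forall>j. 1 \<le> j \<and> j < d \<longrightarrow> (\<forall>x. \<psi> j x \<le> \<psi> (Suc j) x)) \<and>
     (\<forall>q \<mu> :: real. card {i\<in>{1..d}. \<phi> i q = ereal \<mu>} = card {j\<in>{1..d}. \<psi> j \<mu> = ereal q})"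

definition Phi :: "nat \<Rightarrow> nat \<Rightarrow> (nat \<Rightarrow> real \<Rightarrow> ereal) \<Rightarrow> bool" where
  "Phi b d \<phi> \<longleftrightarrow>
     (\<forall>i. 1 \<le> i \<and> i < d \<longrightarrow> (\<forall>x. \<phi> (Suc i) x \<le> \<phi> i x)) \<and>
     (\<forall>i\<in>{1..d}. no_pinf (\<phi> i) \<and> strictly_incr (\<phi> i) \<and> right_cont (\<phi> i)) \<and>
     (\<forall>i\<in>{1..d}. \<exists>q0. tail_cond b (\<phi> i) q0) \<and>
     (\<exists>\<psi>. conj_family d \<phi> \<psi>)"

definition Phi_Z :: "nat \<Rightarrow> nat \<Rightarrow> (nat \<Rightarrow> real \<Rightarrow> ereal) \<Rightarrow> bool" where
  "Phi_Z b d \<phi> \<longleftrightarrow> Phi b d \<phi> \<and>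
     (\<forall>i\<in>{1..d}. (\<exists>q0::int. tail_cond b (\<phi> i) (of_int q0)) \<and>
        (\<forall>x. \<not> isCont (\<phi> i) x \<longrightarrow> (\<exists>k::int. x = of_int k / real b)))"

definition ext_minf :: "(real \<Rightarrow> ereal) \<Rightarrow> ereal \<Rightarrow> ereal" where
  "ext_minf f q = (if q = -\<infinity> then -\<infinity> else f (real_of_ereal q))"

definition mu1 :: "nat \<Rightarrow> (nat \<Rightarrow> real \<Rightarrow> ereal) \<Rightarrow> (nat \<Rightarrow> real \<Rightarrow> ereal) \<Rightarrow> nat \<Rightarrow> real" where
  "mu1 d \<phi> \<psi> j = Inf {\<mu>::real.
      ext_minf (\<phi> 1) (\<psi> j \<mu>) > ereal \<mu> \<or>
      (ext_minf (\<phi> 1) (\<psi> j \<mu>) = ereal \<mu> \<and>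
        card {i'\<in>{1..1}. ext_minf (\<phi> i') (\<psi> j \<mu>) = ereal \<mu>}
          \<le> card {j'\<in>{1..j}. \<psi> j' \<mu> = \<psi> j \<mu>})}"

definition dim_phi :: "nat \<Rightarrow> (nat \<Rightarrow> real \<Rightarrow> ereal) \<Rightarrow> real" where
  "dim_phi d \<phi> = (\<Sum>i\<in>{1..d}. \<Sum>i'\<in>{i<..d}.
      measure lebesgue {\<mu>::real. ereal \<mu> \<in> range (\<phi> i') \<and> ereal \<mu> \<notin> range (\<phi> i)})"

end

theory Submission
  imports Defs
begin


lemma ev_left_less: "\<forall>\<^sub>F y in at_left (z::real). y < z"
  unfolding eventually_at_left_field by (intro exI[of _ "z - 1"]) auto

definition Fr :: "(real \<Rightarrow> ereal) \<Rightarrow> real \<Rightarrow> real" where "Fr f x = real_of_ereal (f x)"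
definition ImgF :: "(real \<Rightarrow> ereal) \<Rightarrow> real \<Rightarrow> real \<Rightarrow> real set" where
  "ImgF f x y = {\<mu>. \<exists>z. x \<le> z \<and> z < y \<and> Fr f z = \<mu>}"

locale pf =
  fixes b :: nat and f :: "real \<Rightarrow> ereal" and q0 :: real and S :: "real set" and Q :: real
  assumes b1: "b \<ge> 1"
    and nopinf: "\<And>x. f x \<noteq> \<infinity>"
    and fin: "\<And>x. f x \<noteq> -\<infinity> \<longleftrightarrow> q0 \<le> x"
    and smono: "\<And>x y. x < y \<Longrightarrow> f x \<noteq> -\<infinity> \<Longrightarrow> f y \<noteq> -\<infinity> \<Longrightarrow> f x < f y"
    and rc: "\<And>x. continuous (at_right x) f"
    and finS: "finite S"
    and aff: "\<And>x y. q0 < x \<Longrightarrow> x \<le> y \<Longrightarrow> (\<forall>s\<in>S. \<not> (x \<le> s \<and> s \<le> y)) \<Longrightarrow> f y = f x + ereal (real b * (y - x))"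
    and tail: "\<And>q. q \<ge> Q \<Longrightarrow> f q = ereal (real b * q - q0)"
    and Qq: "q0 \<le> Q"
begin

abbreviation F where "F \<equiv> Fr f"

lemma fF: "q0 \<le> x \<Longrightarrow> f x = ereal (F x)"
  using fin[of x] nopinf[of x] unfolding Fr_def by (cases "f x") auto

lemma fminf: "x < q0 \<Longrightarrow> f x = -\<infinity>"
  using fin[of x] by auto

lemma F_smono: "q0 \<le> x \<Longrightarrow> x < y \<Longrightarrow> F x < F y"
  using smono[of x y] fF[of x] fF[of y] fin by auto

lemma F_mono: "q0 \<le> x \<Longrightarrow> x \<le> y \<Longrightarrow> F x \<le> F y"
  using F_smono[of x y] by (cases "x = y") auto

lemma affF: "q0 < x \<Longrightarrow> x \<le> y \<Longrightarrow> (\<forall>s\<in>S. \<not> (x \<le> s \<and> s \<le> y)) \<Longrightarrow> F y = F x + real b * (y - x)"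
  using aff[of x y] fF[of x] fF[of y] by auto

lemma tailF: "q \<ge> Q \<Longrightarrow> F q = real b * q - q0"
  using tail[of q] unfolding Fr_def by simp

lemma rlim:
  assumes "q0 \<le> z" "\<forall>\<^sub>F y in at_right z. F y = c + real b * y"
  shows "F z = c + real b * z"
proof -
  have 1: "(f \<longlongrightarrow> f z) (at_right z)" using rc[of z] by (simp add: continuous_within)
  have "((\<lambda>y. ereal (c + real b * y)) \<longlongrightarrow> ereal (c + real b * z)) (at_right z)"
    by (intro tendsto_intros lim_ereal[THEN iffD2]) 
  moreover have "\<forall>\<^sub>F y in at_right z. ereal (c + real b * y) = f y"
    using assms(2) eventually_at_right_less[of z]
  proof eventually_elim
    case (elim y) then show ?case using fF[of y] assms(1) by auto
  qed
  ultimately have 2: "(f \<longlongrightarrow> ereal (c + real b * z)) (at_right z)"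
    by (rule Lim_transform_eventually)
  have "f z = ereal (c + real b * z)"
    using tendsto_unique[OF _ 1 2] by simp
  then show ?thesis using fF[OF assms(1)] by simp
qed

lemma RA:
  assumes "q0 \<le> z" "z < w" "\<forall>s\<in>S. \<not> (z < s \<and> s < w)" "z \<le> y" "y < w"
  shows "F y = F z + real b * (y - z)"
proof -
  define m where "m = (z + w) / 2"
  have m: "z < m" "m < w" using assms(2) unfolding m_def by auto
  have mid: "F y = F m + real b * (y - m)" if "z < y" "y < w" for y
  proof (cases "m \<le> y")
    case True then show ?thesis
      using affF[of m y] assms(1,3) m that by force
  next
    case False 
    then have "F m = F y + real b * (m - y)"
      using affF[of y m] assms(1,3) m that by force
    then show ?thesis by (simp add: algebra_simps)
  qed
  have "F z = (F m - real b * m) + real b * z"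
  proof (rule rlim[OF assms(1)])
    have "\<forall>\<^sub>F y in at_right z. y < w" using assms(2) eventually_at_right_field by blast
    then show "\<forall>\<^sub>F y in at_right z. F y = F m - real b * m + real b * y"
      using eventually_at_right_less[of z]
    proof eventually_elim
      case (elim y) then show ?case using mid[of y] by (simp add: algebra_simps)
    qed
  qed
  then show ?thesis
    using mid[of y] assms(4,5) by (cases "y = z") (auto simp: algebra_simps)
qed

lemma LA:
  assumes "q0 < z"
  shows "\<exists>c. \<forall>\<^sub>F y in at_left z. q0 < y \<and> F y = c + real b * y"
proof -
  have ev: "\<forall>\<^sub>F y in at_left z. q0 < y \<and> (\<forall>s\<in>S. \<not> (y \<le> s \<and> s < z))"
  proof (intro eventually_conj eventually_ball_finite[OF finS] ballI)
    show "\<forall>\<^sub>F y in at_left z. q0 < y" using assms eventually_at_left_field by blast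
    fix s assume "s \<in> S"
    show "\<forall>\<^sub>F y in at_left z. \<not> (y \<le> s \<and> s < z)"
    proof (cases "s < z")
      case True then show ?thesis
        using eventually_at_left_field[of "\<lambda>y. \<not> (y \<le> s \<and> s < z)" z] by force
    qed auto
  qed
  then obtain a where a: "a < z" "\<And>y. a < y \<Longrightarrow> y < z \<Longrightarrow> q0 < y \<and> (\<forall>s\<in>S. \<not> (y \<le> s \<and> s < z))"
    unfolding eventually_at_left_field by blast
  define m where "m = (a + z) / 2"
  have m: "a < m" "m < z" using a(1) unfolding m_def by auto
  have mid: "F y = F m + real b * (y - m)" if "a < y" "y < z" for y
  proof (cases "m \<le> y")
    case True then show ?thesis
      using affF[of m y] a(2)[of m] m that by force
  next
    case False 
    then have "F m = F y + real b * (m - y)"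
      using affF[of y m] a(2)[of y] m that by force
    then show ?thesis by (simp add: algebra_simps)
  qed
  show ?thesis
  proof (intro exI[of _ "F m - real b * m"])
    have "\<forall>\<^sub>F y in at_left z. a < y" using a(1) eventually_at_left_field by blast
    then show "\<forall>\<^sub>F y in at_left z. q0 < y \<and> F y = F m - real b * m + real b * y"
      using ev_left_less[of z]
    proof eventually_elim
      case (elim y) then show ?case using mid[of y] a(2)[of y] by (simp add: algebra_simps)
    qed
  qed
qed

lemma LAcont:
  assumes "q0 < z" "isCont f z" "\<forall>\<^sub>F y in at_left z. F y = c + real b * y"
  shows "F z = c + real b * z"
proof -
  have 1: "(f \<longlongrightarrow> f z) (at_left z)"
    using assms(2) unfolding continuous_at by (rule tendsto_mono[OF at_le, rotated]) auto
  have "((\<lambda>y. ereal (c + real b * y)) \<longlongrightarrow> ereal (c + real b * z)) (at_left z)"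
    by (intro tendsto_intros lim_ereal[THEN iffD2]) 
  moreover have "\<forall>\<^sub>F y in at_left z. ereal (c + real b * y) = f y"
    using assms(3) eventually_at_left_field[of "\<lambda>y. q0 < y" z] assms(1)
  proof -
    have "\<forall>\<^sub>F y in at_left z. q0 < y" using assms(1) eventually_at_left_field by blast
    then show ?thesis using assms(3)
    proof eventually_elim
      case (elim y) then show ?case using fF[of y] by auto
    qed
  qed
  ultimately have 2: "(f \<longlongrightarrow> ereal (c + real b * z)) (at_left z)"
    by (rule Lim_transform_eventually)
  have "f z = ereal (c + real b * z)"
    using tendsto_unique[OF _ 1 2] by simp
  then show ?thesis using fF[of z] assms(1) by simp
qed


abbreviation Img where "Img \<equiv> ImgF f"

lemma IMG:
  "q0 \<le> x \<Longrightarrow> x \<le> y \<Longrightarrow> Img x y \<in> sets lebesgue \<and> emeasure lebesgue (Img x y) = ennreal (real b * (y - x))"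
proof (induction "card (S \<inter> {x<..<y})" arbitrary: x y rule: less_induct)
  case less
  show ?case
  proof (cases "S \<inter> {x<..<y} = {}")
    case True
    have bpos: "real b > 0" using b1 by simp
    have Sfree: "\<forall>s\<in>S. \<not> (x < s \<and> s < y)" using True by auto
    have eq: "Img x y = {F x ..< F x + real b * (y - x)}"
    proof (intro set_eqI iffI)
      fix \<mu> assume "\<mu> \<in> Img x y"
      then obtain z where z: "x \<le> z" "z < y" "F z = \<mu>" unfolding ImgF_def by auto
      have "F z = F x + real b * (z - x)"
        using RA[of x y z] less.prems Sfree z by auto
      then show "\<mu> \<in> {F x ..< F x + real b * (y - x)}"
        using z bpos by (auto intro!: mult_strict_left_mono)
    next
      fix \<mu> assume mu: "\<mu> \<in> {F x ..< F x + real b * (y - x)}"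
      define z where "z = x + (\<mu> - F x) / real b"
      have xz: "x \<le> z" "z < y" using mu bpos unfolding z_def
        by (auto simp: field_simps)
      have "F z = F x + real b * (z - x)"
        using RA[of x y z] less.prems Sfree xz by auto
      also have "\<dots> = \<mu>" unfolding z_def using bpos by simp
      finally show "\<mu> \<in> Img x y" unfolding ImgF_def using xz by auto
    qed
    show ?thesis unfolding eq using less.prems bpos by simp
  next
    case False
    then obtain s where s: "s \<in> S" "x < s" "s < y" by auto
    have c1: "card (S \<inter> {x<..<s}) < card (S \<inter> {x<..<y})"
      by (rule psubset_card_mono) (use finS s in auto)
    have c2: "card (S \<inter> {s<..<y}) < card (S \<inter> {x<..<y})"
      by (rule psubset_card_mono) (use finS s in auto)
    have IH1: "Img x s \<in> sets lebesgue \<and> emeasure lebesgue (Img x s) = ennreal (real b * (s - x))"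
      using less.hyps[OF c1] less.prems s by auto
    have IH2: "Img s y \<in> sets lebesgue \<and> emeasure lebesgue (Img s y) = ennreal (real b * (y - s))"
      using less.hyps[OF c2] less.prems s by auto
    have un: "Img x y = Img x s \<union> Img s y"
      unfolding ImgF_def using s
    proof (auto)
      fix z assume "s \<le> z" "z < y"
      then show "\<exists>za\<ge>x. za < y \<and> F za = F z" using s by (intro exI[of _ z]) auto
    next
      fix z assume "\<forall>za<y. s \<le> za \<longrightarrow> F za \<noteq> F z" "x \<le> z" "z < y"
      then show "\<exists>za\<ge>x. za < s \<and> F za = F z" by (intro exI[of _ z]) force
    qed
    have dj: "Img x s \<inter> Img s y = {}"
      unfolding ImgF_def using F_smono less.prems
      by (auto, metis less_le_trans not_less_iff_gr_or_eq order.trans)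
    have "emeasure lebesgue (Img x y) = emeasure lebesgue (Img x s) + emeasure lebesgue (Img s y)"
      unfolding un using IH1 IH2 dj by (intro plus_emeasure[symmetric]) auto
    also have "\<dots> = ennreal (real b * (y - x))"
    proof -
      have "real b * (s - x) \<ge> 0" "real b * (y - s) \<ge> 0" using s by auto
      then have "ennreal (real b * (s - x)) + ennreal (real b * (y - s)) = ennreal (real b * (s - x) + real b * (y - s))"
        by (rule ennreal_plus[symmetric])
      then show ?thesis using IH1 IH2 by (simp add: algebra_simps)
    qed
    finally show ?thesis using un IH1 IH2 by auto
  qed
qed

lemma range_iff: "ereal \<mu> \<in> range f \<longleftrightarrow> (\<exists>z\<ge>q0. F z = \<mu>)"
proof
  assume "ereal \<mu> \<in> range f"
  then obtain z where "f z = ereal \<mu>" by auto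
  then show "\<exists>z\<ge>q0. F z = \<mu>" using fin[of z] Fr_def by (intro exI[of _ z]) auto
next
  assume "\<exists>z\<ge>q0. F z = \<mu>" then show "ereal \<mu> \<in> range f" using fF by (metis rangeI)
qed

lemma range_low: "ereal \<mu> \<in> range f \<Longrightarrow> F q0 \<le> \<mu>"
  using range_iff F_mono by auto

lemma range_high: "\<mu> \<ge> real b * Q - q0 \<Longrightarrow> ereal \<mu> \<in> range f"
proof -
  assume a: "\<mu> \<ge> real b * Q - q0"
  define z where "z = (\<mu> + q0) / real b"
  have bpos: "real b > 0" using b1 by simp
  have "z \<ge> Q" using a bpos unfolding z_def by (simp add: field_simps)
  then have "F z = \<mu>" using tailF bpos unfolding z_def by simp
  then show ?thesis using range_iff[of \<mu>] \<open>z \<ge> Q\<close> Qq by (intro iffD2[OF range_iff] exI[of _ z]) auto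
qed

lemma range_Img:
  assumes "y \<ge> Q"
  shows "{\<mu>. ereal \<mu> \<in> range f \<and> \<mu> < real b * y - q0} = Img q0 y"
proof (intro set_eqI iffI)
  have Fy: "F y = real b * y - q0" using tailF assms by simp
  fix \<mu>
  { assume "\<mu> \<in> {\<mu>. ereal \<mu> \<in> range f \<and> \<mu> < real b * y - q0}"
    then obtain z where z: "z \<ge> q0" "F z = \<mu>" "\<mu> < F y" using range_iff Fy by auto
    then have "z < y" using F_mono[of y z] Qq assms by force
    then show "\<mu> \<in> Img q0 y" unfolding ImgF_def using z by auto }
  { assume "\<mu> \<in> Img q0 y"
    then obtain z where z: "z \<ge> q0" "z < y" "F z = \<mu>" unfolding ImgF_def by auto
    then show "\<mu> \<in> {\<mu>. ereal \<mu> \<in> range f \<and> \<mu> < real b * y - q0}"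
      using F_smono[of z y] Fy range_iff by auto }
qed


lemma RAev: assumes "q0 \<le> z" shows "\<exists>w>z. \<forall>y. z \<le> y \<and> y < w \<longrightarrow> F y = F z + real b * (y - z)"
proof -
  have "\<forall>\<^sub>F w in at_right z. z < w \<and> (\<forall>s\<in>S. \<not> (z < s \<and> s < w))"
  proof (intro eventually_conj eventually_ball_finite[OF finS] ballI)
    show "\<forall>\<^sub>F w in at_right z. z < w" by (rule eventually_at_right_less)
    fix s assume "s \<in> S"
    show "\<forall>\<^sub>F w in at_right z. \<not> (z < s \<and> s < w)"
    proof (cases "z < s")
      case True then show ?thesis
        using eventually_at_right_field[of "\<lambda>w. \<not> (z < s \<and> s < w)" z] by force
    qed auto
  qed
  then obtain w where "z < w" "\<forall>s\<in>S. \<not> (z < s \<and> s < w)"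
    using eventually_happens[of _ "at_right z"] by auto
  then show ?thesis using RA[OF assms] by blast
qed

lemma START:
  assumes "q0 < x" "isCont f x"
  shows "\<forall>\<^sub>F \<mu> in at_left (F x). ereal \<mu> \<in> range f"
proof -
  obtain c where c: "\<forall>\<^sub>F y in at_left x. q0 < y \<and> F y = c + real b * y" using LA[OF assms(1)] by blast
  have ev': "\<forall>\<^sub>F y in at_left x. F y = c + real b * y" using c by (rule eventually_mono) auto
  have Fx: "F x = c + real b * x" by (rule LAcont[OF assms ev'])
  obtain a where a: "a < x" "\<And>y. a < y \<Longrightarrow> y < x \<Longrightarrow> q0 < y \<and> F y = c + real b * y"
    using c unfolding eventually_at_left_field by blast
  have bpos: "real b > 0" using b1 by simp
  show ?thesis unfolding eventually_at_left_field
  proof (intro exI[of _ "F x - real b * (x - a)"] conjI allI impI)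
    show "F x - real b * (x - a) < F x" using a bpos by simp
    fix \<mu> assume mu: "F x - real b * (x - a) < \<mu>" "\<mu> < F x"
    define y where "y = x - (F x - \<mu>) / real b"
    have y: "a < y" "y < x" using mu bpos unfolding y_def by (auto simp: field_simps)
    have "F y = \<mu>" using a(2)[OF y] Fx bpos unfolding y_def by (simp add: field_simps)
    then show "ereal \<mu> \<in> range f" using range_iff a(2)[OF y] by force
  qed
qed

lemma GAP:
  assumes "q0 \<le> x" "F x - real b * x \<notin> \<int>" "q0 \<in> \<int>"
    and disc: "\<And>t. \<not> isCont f t \<Longrightarrow> \<exists>k::int. t = of_int k / real b"
  shows "\<exists>t. x < t \<and> F x - real b * x + real b * t \<notin> \<int> \<and> ereal (F x - real b * x + real b * t) \<notin> range f
     \<and> (\<forall>\<^sub>F \<mu> in at_left (F x - real b * x + real b * t). ereal \<mu> \<in> range f)"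
proof -
  have bpos: "real b > 0" using b1 by simp
  define G where "G y = F y - real b * y" for y
  define T where "T = {y. x \<le> y \<and> G y \<noteq> G x}"
  define Q' where "Q' = max Q x"
  have "G Q' = - q0" unfolding G_def Q'_def using tailF[of "max Q x"] by simp
  moreover have "G x \<notin> \<int>" using assms(2) unfolding G_def .
  moreover have "- q0 \<in> \<int>" using assms(3) by simp
  moreover have "x \<le> Q'" by (simp add: Q'_def)
  ultimately have "G Q' \<noteq> G x" "x \<le> Q'" by (metis Ints_minus) (simp add: Q'_def)
  then have "Q' \<in> T" unfolding T_def by auto
  then have Tne: "T \<noteq> {}" by auto
  have Tbdd: "bdd_below T" unfolding T_def bdd_below_def by auto
  define t where "t = Inf T"
  have a: "G y = G x" if "x \<le> y" "y < t" for y
  proof (rule ccontr)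
    assume "G y \<noteq> G x"
    then have "y \<in> T" unfolding T_def using that by auto
    then have "t \<le> y" unfolding t_def using Tbdd by (rule cInf_lower)
    then show False using that by simp
  qed
  obtain w where w: "w > x" "\<And>y. x \<le> y \<and> y < w \<Longrightarrow> F y = F x + real b * (y - x)"
    using RAev[OF assms(1)] by blast
  have "w \<le> t" unfolding t_def
  proof (rule cInf_greatest[OF Tne])
    fix y assume "y \<in> T"
    then show "w \<le> y" unfolding T_def G_def using w by (force simp: algebra_simps)
  qed
  then have xt: "x < t" using w by simp
  have Gt: "G t \<noteq> G x"
  proof
    assume eq: "G t = G x"
    obtain w' where w': "w' > t" "\<And>y. t \<le> y \<and> y < w' \<Longrightarrow> F y = F t + real b * (y - t)"
      using RAev[of t] assms(1) xt by auto
    have "w' \<le> t" unfolding t_def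
    proof (rule cInf_greatest[OF Tne])
      fix y assume y: "y \<in> T"
      show "w' \<le> y"
      proof (rule ccontr)
        assume "\<not> w' \<le> y"
        then have "y < w'" by simp
        show False
        proof (cases "y < t")
          case True then show False using a[of y] y unfolding T_def by auto
        next
          case False then have "G y = G t" using w'(2)[of y] \<open>y < w'\<close> unfolding G_def by (auto simp: algebra_simps)
          then show False using eq y unfolding T_def by auto
        qed
      qed
    qed
    then show False using w' by simp
  qed
  have ncont: "\<not> isCont f t"
  proof
    assume ic: "isCont f t"
    have "\<forall>\<^sub>F y in at_left t. F y = G x + real b * y"
    proof -
      have "\<forall>\<^sub>F y in at_left t. x < y" using xt eventually_at_left_field by blast
      then show ?thesis using ev_left_less[of t]
      proof eventually_elim
        case (elim y) then show ?case using a[of y] unfolding G_def by auto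
      qed
    qed
    then have "F t = G x + real b * t" using LAcont[OF _ ic] assms(1) xt by auto
    then show False using Gt unfolding G_def by simp
  qed
  obtain k :: int where k: "t = of_int k / real b" using disc[OF ncont] by blast
  have bt: "real b * t = of_int k" using k bpos by simp
  define l where "l = G x + real b * t"
  have lnint: "l \<notin> \<int>"
  proof
    assume "l \<in> \<int>"
    then have "l - of_int k \<in> \<int>" by (intro Ints_diff) auto
    then show False using assms(2) unfolding l_def bt G_def by simp
  qed
  have Fty: "F y = G x + real b * y" if "x \<le> y" "y < t" for y
    using a[OF that] unfolding G_def by simp
  have Ftl: "F t > l"
  proof -
    have "F t \<ge> l"
    proof (rule ccontr)
      assume "\<not> F t \<ge> l"
      then have lt: "F t < l" by simp
      define y where "y = max x (t - (l - F t) / (2 * real b))"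
      have y: "x \<le> y" "y < t" unfolding y_def using xt lt bpos by (auto simp: field_simps)
      have "real b * y \<ge> real b * t - (l - F t) / 2"
      proof -
        have "y \<ge> t - (l - F t) / (2 * real b)" unfolding y_def by simp
        then have "real b * y \<ge> real b * (t - (l - F t) / (2 * real b))"
          using bpos by (intro mult_left_mono) auto
        moreover have "real b * (t - (l - F t) / (2 * real b)) = real b * t - (l - F t) / 2"
          using bpos by (simp add: field_simps)
        ultimately show ?thesis by linarith
      qed
      then have "F y > F t" using Fty[OF y] lt unfolding l_def by (simp add: field_simps)
      moreover have "F y < F t" using F_smono[of y t] y assms(1) by simp
      ultimately show False by simp
    qed
    moreover have "F t \<noteq> l" using Gt unfolding l_def G_def by auto
    ultimately show ?thesis by simp
  qed
  have lnr: "ereal l \<notin> range f"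
  proof
    assume "ereal l \<in> range f"
    then obtain z where z: "z \<ge> q0" "F z = l" using range_iff by auto
    show False
    proof (cases "t \<le> z")
      case True then show False using F_mono[of t z] z Ftl assms(1) xt by simp
    next
      case False
      show False
      proof (cases "x \<le> z")
        case True then show False using Fty[of z] False z bpos unfolding l_def by simp
      next
        case nx: False
        have "F z \<le> F x" using F_mono[of z x] z nx by simp
        moreover have "F x < l" using Fty[of x] xt bpos unfolding l_def by simp
        ultimately show False using z by simp
      qed
    qed
  qed
  have ev: "\<forall>\<^sub>F \<mu> in at_left l. ereal \<mu> \<in> range f"
    unfolding eventually_at_left_field
  proof (intro exI[of _ "l - real b * (t - x)"] conjI allI impI)
    show "l - real b * (t - x) < l" using xt bpos by simp
    fix \<mu> assume mu: "l - real b * (t - x) < \<mu>" "\<mu> < l"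
    define y where "y = t - (l - \<mu>) / real b"
    have y: "x < y" "y < t" using mu bpos unfolding y_def by (auto simp: field_simps)
    have "F y = \<mu>" using Fty[of y] y bpos unfolding y_def l_def by (simp add: field_simps)
    moreover have "q0 \<le> y" using y assms(1) by simp
    ultimately show "ereal \<mu> \<in> range f" using range_iff by blast
  qed
  show ?thesis using xt lnint lnr ev unfolding l_def G_def by blast
qed

end



locale mainloc =
  fixes b d :: nat and \<phi> \<psi> :: "nat \<Rightarrow> real \<Rightarrow> ereal"
  assumes b2: "b \<ge> 2" and d1: "d \<ge> 1" and PZ: "Phi_Z b d \<phi>" and CF: "conj_family d \<phi> \<psi>"
begin

lemma PFex: "i \<in> {1..d} \<Longrightarrow> \<exists>q::int. \<exists>S Q. pf b (\<phi> i) (real_of_int q) S Q"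
proof -
  assume i: "i \<in> {1..d}"
  from PZ i obtain q :: int where tc: "tail_cond b (\<phi> i) (of_int q)" unfolding Phi_Z_def by blast
  from PZ i have pr: "no_pinf (\<phi> i) \<and> strictly_incr (\<phi> i) \<and> right_cont (\<phi> i)"
    unfolding Phi_Z_def Phi_def by blast
  from tc obtain S Q where S: "finite S" "\<forall>x y. real_of_int q < x \<and> x \<le> y \<and> (\<forall>s\<in>S. \<not> (x \<le> s \<and> s \<le> y)) \<longrightarrow> \<phi> i y = \<phi> i x + ereal (real b * (y - x))"
    and Q: "\<forall>qq\<ge>Q. \<phi> i qq = ereal (real b * qq - of_int q)" and fin: "\<forall>x. \<phi> i x \<noteq> -\<infinity> \<longleftrightarrow> of_int q \<le> x"
    unfolding tail_cond_def by blast
  have "pf b (\<phi> i) (of_int q) S (max Q (of_int q))"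
    apply unfold_locales using b2 pr S Q fin unfolding no_pinf_def strictly_incr_def right_cont_def by auto
  then show ?thesis by blast
qed

definition qi where "qi i = (SOME q::int. \<exists>S Q. pf b (\<phi> i) (real_of_int q) S Q)"
definition Si where "Si i = (SOME S. \<exists>Q. pf b (\<phi> i) (real_of_int (qi i)) S Q)"
definition Qi where "Qi i = (SOME Q. pf b (\<phi> i) (real_of_int (qi i)) (Si i) Q)"

lemma PF: "i \<in> {1..d} \<Longrightarrow> pf b (\<phi> i) (real_of_int (qi i)) (Si i) (Qi i)"
proof -
  assume i: "i \<in> {1..d}"
  have "\<exists>S Q. pf b (\<phi> i) (real_of_int (qi i)) S Q" using someI_ex[OF PFex[OF i]] unfolding qi_def .
  then have "\<exists>Q. pf b (\<phi> i) (real_of_int (qi i)) (Si i) Q" unfolding Si_def by (rule someI_ex)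
  then show ?thesis unfolding Qi_def by (rule someI_ex)
qed

lemma disc: "i \<in> {1..d} \<Longrightarrow> \<not> isCont (\<phi> i) x \<Longrightarrow> \<exists>k::int. x = of_int k / real b"
  using PZ unfolding Phi_Z_def by blast

lemma phi_step: "1 \<le> i \<Longrightarrow> i < d \<Longrightarrow> \<phi> (Suc i) x \<le> \<phi> i x"
  using PZ unfolding Phi_Z_def Phi_def by blast

lemma phi_chain: assumes "1 \<le> i" "i \<le> i'" "i' \<le> d" shows "\<phi> i' x \<le> \<phi> i x"
  using assms(2,3)
proof (induction i' rule: dec_induct)
  case base then show ?case by simp
next
  case (step n)
  have "\<phi> (Suc n) x \<le> \<phi> n x" using phi_step[of n x] assms(1) step by simp
  moreover have "\<phi> n x \<le> \<phi> i x" using step by simp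
  ultimately show ?case by (rule order.trans)
qed

lemma psi_props: "j \<in> {1..d} \<Longrightarrow> no_pinf (\<psi> j) \<and> strictly_incr (\<psi> j) \<and> right_cont (\<psi> j)"
  using CF unfolding conj_family_def by blast

lemma psi_step: "1 \<le> j \<Longrightarrow> j < d \<Longrightarrow> \<psi> j x \<le> \<psi> (Suc j) x"
  using CF unfolding conj_family_def by blast

lemma psi_chain: assumes "1 \<le> j" "j \<le> j'" "j' \<le> d" shows "\<psi> j x \<le> \<psi> j' x"
  using assms(2,3)
proof (induction j' rule: dec_induct)
  case base then show ?case by simp
next
  case (step n)
  have "\<psi> j x \<le> \<psi> n x" using step by simp
  moreover have "\<psi> n x \<le> \<psi> (Suc n) x" using psi_step[of n x] assms(1) step by simp
  ultimately show ?case by (rule order.trans)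
qed

lemma conj: "card {i\<in>{1..d}. \<phi> i q = ereal \<mu>} = card {j\<in>{1..d}. \<psi> j \<mu> = ereal q}"
  using CF unfolding conj_family_def by blast

lemma psi_mono: "j \<in> {1..d} \<Longrightarrow> x \<le> y \<Longrightarrow> \<psi> j x \<le> \<psi> j y"
  using psi_props[of j] unfolding strictly_incr_def mono_def by blast

lemma psi_fin: "j \<in> {1..d} \<Longrightarrow> \<psi> j \<mu> \<noteq> -\<infinity> \<Longrightarrow> \<psi> j \<mu> = ereal (real_of_ereal (\<psi> j \<mu>))"
  using psi_props[of j] unfolding no_pinf_def by (cases "\<psi> j \<mu>") auto

lemma phi_inj: "i \<in> {1..d} \<Longrightarrow> \<phi> i q = ereal \<mu> \<Longrightarrow> \<phi> i q' = ereal \<mu> \<Longrightarrow> q = q'"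
proof (rule ccontr)
  assume i: "i \<in> {1..d}" and a: "\<phi> i q = ereal \<mu>" "\<phi> i q' = ereal \<mu>" "q \<noteq> q'"
  have si: "\<forall>x y. x < y \<and> \<phi> i x \<noteq> -\<infinity> \<and> \<phi> i y \<noteq> -\<infinity> \<longrightarrow> \<phi> i x < \<phi> i y"
    using PZ i unfolding Phi_Z_def Phi_def strictly_incr_def by blast
  show False
  proof (cases "q < q'")
    case True then show False using si a by force
  next
    case False then have "q' < q" using a by simp
    then show False using si a by force
  qed
qed

lemma exists_phi: "j \<in> {1..d} \<Longrightarrow> \<psi> j \<mu> = ereal z \<Longrightarrow> \<exists>i\<in>{1..d}. \<phi> i z = ereal \<mu>"
proof -
  assume j: "j \<in> {1..d}" "\<psi> j \<mu> = ereal z"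
  then have "card {j\<in>{1..d}. \<psi> j \<mu> = ereal z} > 0" by (intro card_gt_0_iff[THEN iffD2]) auto
  then have "card {i\<in>{1..d}. \<phi> i z = ereal \<mu>} > 0" using conj by simp
  then show ?thesis unfolding card_gt_0_iff by blast
qed

lemma exists_psi: "i \<in> {1..d} \<Longrightarrow> \<phi> i z = ereal \<mu> \<Longrightarrow> \<exists>j\<in>{1..d}. \<psi> j \<mu> = ereal z"
proof -
  assume j: "i \<in> {1..d}" "\<phi> i z = ereal \<mu>"
  then have "card {i\<in>{1..d}. \<phi> i z = ereal \<mu>} > 0" by (intro card_gt_0_iff[THEN iffD2]) auto
  then have "card {j\<in>{1..d}. \<psi> j \<mu> = ereal z} > 0" using conj by simp
  then show ?thesis unfolding card_gt_0_iff by blast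
qed

lemma CNT: "card {j\<in>{1..d}. \<psi> j \<mu> \<noteq> -\<infinity>} = card {i\<in>{1..d}. ereal \<mu> \<in> range (\<phi> i)}"
proof -
  define Qs where "Qs = (\<lambda>j. real_of_ereal (\<psi> j \<mu>)) ` {1..d}"
  have fQ: "finite Qs" unfolding Qs_def by simp
  have e1: "{i\<in>{1..d}. ereal \<mu> \<in> range (\<phi> i)} = (\<Union>q\<in>Qs. {i\<in>{1..d}. \<phi> i q = ereal \<mu>})"
  proof (intro set_eqI iffI)
    fix i assume "i \<in> {i\<in>{1..d}. ereal \<mu> \<in> range (\<phi> i)}"
    then obtain z where i: "i \<in> {1..d}" "\<phi> i z = ereal \<mu>" by auto
    obtain j where "j \<in> {1..d}" "\<psi> j \<mu> = ereal z" using exists_psi[OF i] by blast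
    then have "z \<in> Qs" unfolding Qs_def by force
    then show "i \<in> (\<Union>q\<in>Qs. {i\<in>{1..d}. \<phi> i q = ereal \<mu>})" using i by auto
  next
    fix i assume "i \<in> (\<Union>q\<in>Qs. {i\<in>{1..d}. \<phi> i q = ereal \<mu>})"
    then obtain q where "i \<in> {1..d}" "\<phi> i q = ereal \<mu>" by auto
    then show "i \<in> {i\<in>{1..d}. ereal \<mu> \<in> range (\<phi> i)}" using rangeI[of "\<phi> i" q] by simp
  qed
  have e2: "{j\<in>{1..d}. \<psi> j \<mu> \<noteq> -\<infinity>} = (\<Union>q\<in>Qs. {j\<in>{1..d}. \<psi> j \<mu> = ereal q})"
  proof (intro set_eqI iffI)
    fix j assume "j \<in> {j\<in>{1..d}. \<psi> j \<mu> \<noteq> -\<infinity>}"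
    then have j: "j \<in> {1..d}" "\<psi> j \<mu> \<noteq> -\<infinity>" by auto
    then have "\<psi> j \<mu> = ereal (real_of_ereal (\<psi> j \<mu>))" by (rule psi_fin)
    then show "j \<in> (\<Union>q\<in>Qs. {j\<in>{1..d}. \<psi> j \<mu> = ereal q})" using j unfolding Qs_def by blast
  qed auto
  have "card {i\<in>{1..d}. ereal \<mu> \<in> range (\<phi> i)} = (\<Sum>q\<in>Qs. card {i\<in>{1..d}. \<phi> i q = ereal \<mu>})"
    unfolding e1
  proof (rule card_UN_disjoint[OF fQ])
    show "\<forall>q\<in>Qs. finite {i\<in>{1..d}. \<phi> i q = ereal \<mu>}" by auto
    show "\<forall>q\<in>Qs. \<forall>q'\<in>Qs. q \<noteq> q' \<longrightarrow> {i\<in>{1..d}. \<phi> i q = ereal \<mu>} \<inter> {i\<in>{1..d}. \<phi> i q' = ereal \<mu>} = {}"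
      using phi_inj by blast
  qed
  also have "\<dots> = (\<Sum>q\<in>Qs. card {j\<in>{1..d}. \<psi> j \<mu> = ereal q})" using conj by simp
  also have "\<dots> = card {j\<in>{1..d}. \<psi> j \<mu> \<noteq> -\<infinity>}"
    unfolding e2
  proof (rule card_UN_disjoint[symmetric, OF fQ])
    show "\<forall>q\<in>Qs. finite {j\<in>{1..d}. \<psi> j \<mu> = ereal q}" by auto
    show "\<forall>q\<in>Qs. \<forall>q'\<in>Qs. q \<noteq> q' \<longrightarrow> {j\<in>{1..d}. \<psi> j \<mu> = ereal q} \<inter> {j\<in>{1..d}. \<psi> j \<mu> = ereal q'} = {}"
      by auto
  qed
  finally show ?thesis by simp
qed

end


context mainloc begin

lemma bpos: "real b > 0" using b2 by simp

definition LL where "LL = Min ((\<lambda>i. Fr (\<phi> i) (qi i)) ` {1..d})"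
definition MM where "MM = Max ((\<lambda>i. real b * Qi i - qi i) ` {1..d})"
definition qmin where "qmin = Min ((\<lambda>i. real_of_int (qi i)) ` {1..d})"

lemma LL_le: "i \<in> {1..d} \<Longrightarrow> LL \<le> Fr (\<phi> i) (qi i)"
  unfolding LL_def by (rule Min_le) auto

lemma MM_ge: "i \<in> {1..d} \<Longrightarrow> real b * Qi i - qi i \<le> MM"
  unfolding MM_def by (rule Max_ge) auto

lemma qmin_le: "i \<in> {1..d} \<Longrightarrow> qmin \<le> qi i"
  unfolding qmin_def by (rule Min_le) auto

lemma rangeL: "i \<in> {1..d} \<Longrightarrow> ereal \<mu> \<in> range (\<phi> i) \<Longrightarrow> LL \<le> \<mu>"
  using pf.range_low[OF PF] LL_le by (meson order.trans)

lemma rangeM: "i \<in> {1..d} \<Longrightarrow> MM \<le> \<mu> \<Longrightarrow> ereal \<mu> \<in> range (\<phi> i)"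
  using pf.range_high[OF PF] MM_ge by (meson order.trans)

lemma LM: "LL \<le> MM"
proof -
  have i: "1 \<in> {1..d}" using d1 by simp
  have "LL \<le> Fr (\<phi> 1) (qi 1)" by (rule LL_le[OF i])
  also have "\<dots> \<le> Fr (\<phi> 1) (Qi 1)" using pf.F_mono[OF PF[OF i]] pf.Qq[OF PF[OF i]] by simp
  also have "\<dots> = real b * Qi 1 - qi 1" using pf.tailF[OF PF[OF i]] by simp
  also have "\<dots> \<le> MM" by (rule MM_ge[OF i])
  finally show ?thesis .
qed

lemma card_split: "card {x\<in>{1..d::nat}. P x} + card {x\<in>{1..d}. \<not> P x} = d"
proof -
  have "card {x\<in>{1..d::nat}. P x} + card {x\<in>{1..d}. \<not> P x} = card ({x\<in>{1..d::nat}. P x} \<union> {x\<in>{1..d}. \<not> P x})"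
    by (rule card_Un_disjoint[symmetric]) auto
  also have "{x\<in>{1..d::nat}. P x} \<union> {x\<in>{1..d}. \<not> P x} = {1..d}" by auto
  finally show ?thesis by simp
qed

lemma psi_low: "\<mu> < LL \<Longrightarrow> j \<in> {1..d} \<Longrightarrow> \<psi> j \<mu> = -\<infinity>"
proof -
  assume a: "\<mu> < LL" "j \<in> {1..d}"
  have "{i\<in>{1..d}. ereal \<mu> \<in> range (\<phi> i)} = {}" using rangeL a(1) by force
  then have "card {j\<in>{1..d}. \<psi> j \<mu> \<noteq> -\<infinity>} = 0" using CNT[of \<mu>] by simp
  then have "{j\<in>{1..d}. \<psi> j \<mu> \<noteq> -\<infinity>} = {}" by simp
  then show ?thesis using a(2) by blast
qed

lemma psi_high: "MM \<le> \<mu> \<Longrightarrow> j \<in> {1..d} \<Longrightarrow> \<psi> j \<mu> \<noteq> -\<infinity>"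
proof -
  assume a: "MM \<le> \<mu>" "j \<in> {1..d}"
  have "{i\<in>{1..d}. ereal \<mu> \<in> range (\<phi> i)} = {1..d}" using rangeM a(1) by force
  then have "card {j\<in>{1..d}. \<psi> j \<mu> \<noteq> -\<infinity>} = card {1..d}" using CNT[of \<mu>] by simp
  then have "{j\<in>{1..d}. \<psi> j \<mu> \<noteq> -\<infinity>} = {1..d}" by (intro card_subset_eq) auto
  then show ?thesis using a(2) by blast
qed

lemma psi_lb: "j \<in> {1..d} \<Longrightarrow> \<psi> j \<mu> \<noteq> -\<infinity> \<Longrightarrow> ereal qmin \<le> \<psi> j \<mu>"
proof -
  assume a: "j \<in> {1..d}" "\<psi> j \<mu> \<noteq> -\<infinity>"
  define z where "z = real_of_ereal (\<psi> j \<mu>)"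
  have e: "\<psi> j \<mu> = ereal z" using psi_fin[OF a] unfolding z_def .
  obtain i where i: "i \<in> {1..d}" "\<phi> i z = ereal \<mu>" using exists_phi[OF a(1) e] by blast
  have "qi i \<le> z" using pf.fin[OF PF[OF i(1)], of z] i(2) by simp
  then show ?thesis using qmin_le[OF i(1)] e by simp
qed

definition r where "r j = Inf {\<mu>. \<psi> j \<mu> \<noteq> -\<infinity>}"

lemma r_props:
  assumes j: "j \<in> {1..d}"
  shows "LL \<le> r j \<and> r j \<le> MM \<and> (\<forall>\<mu>. \<psi> j \<mu> \<noteq> -\<infinity> \<longleftrightarrow> r j \<le> \<mu>)"
proof -
  define E where "E = {\<mu>. \<psi> j \<mu> \<noteq> -\<infinity>}"
  have ME: "MM \<in> E" unfolding E_def using psi_high[OF _ j] by simp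
  then have Ene: "E \<noteq> {}" by auto
  have lb: "\<And>\<mu>. \<mu> \<in> E \<Longrightarrow> LL \<le> \<mu>" unfolding E_def using psi_low[OF _ j] by force
  then have bdd: "bdd_below E" unfolding bdd_below_def by auto
  have rE: "r j = Inf E" unfolding r_def E_def ..
  have 1: "r j \<le> MM" unfolding rE using ME bdd by (rule cInf_lower)
  have 2: "LL \<le> r j" unfolding rE using Ene lb by (rule cInf_greatest)
  have 3: "r j \<le> \<mu>" if "\<mu> \<in> E" for \<mu> unfolding rE using that bdd by (rule cInf_lower)
  have 4: "\<mu> \<in> E" if "r j < \<mu>" for \<mu>
  proof -
    have "\<exists>e\<in>E. e < \<mu>" using cInf_less_iff[OF Ene bdd, of \<mu>] that rE by simp
    then obtain e where e: "e \<in> E" "e < \<mu>" by blast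
    have "\<psi> j e \<le> \<psi> j \<mu>" using psi_mono[OF j] e(2) by simp
    moreover have "\<psi> j e \<noteq> -\<infinity>" using e(1) E_def by simp
    ultimately show ?thesis unfolding E_def by (metis ereal_infty_less_eq(2) mem_Collect_eq)
  qed
  have 5: "r j \<in> E"
  proof -
    have "((\<psi> j) \<longlongrightarrow> \<psi> j (r j)) (at_right (r j))"
      using psi_props[OF j] unfolding right_cont_def by (simp add: continuous_within)
    moreover have "\<forall>\<^sub>F y in at_right (r j). ereal qmin \<le> \<psi> j y"
      using eventually_at_right_less[of "r j"]
    proof eventually_elim
      case (elim y) then show ?case using 4[of y] psi_lb[OF j] unfolding E_def by auto
    qed
    ultimately have "ereal qmin \<le> \<psi> j (r j)" by (rule tendsto_lowerbound) simp
    then show ?thesis unfolding E_def by auto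
  qed
  have "\<psi> j \<mu> \<noteq> -\<infinity> \<longleftrightarrow> r j \<le> \<mu>" for \<mu>
  proof
    assume "\<psi> j \<mu> \<noteq> -\<infinity>" then show "r j \<le> \<mu>" using 3 unfolding E_def by auto
  next
    assume "r j \<le> \<mu>" then show "\<psi> j \<mu> \<noteq> -\<infinity>"
      using 4 5 unfolding E_def by (cases "r j = \<mu>") auto
  qed
  then show ?thesis using 1 2 by blast
qed

lemma mu1_eq: assumes j: "j \<in> {1..d}" shows "mu1 d \<phi> \<psi> j = r j"
proof -
  have "{\<mu>::real. ext_minf (\<phi> 1) (\<psi> j \<mu>) > ereal \<mu> \<or>
      (ext_minf (\<phi> 1) (\<psi> j \<mu>) = ereal \<mu> \<and>
        card {i'\<in>{1..1}. ext_minf (\<phi> i') (\<psi> j \<mu>) = ereal \<mu>}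
          \<le> card {j'\<in>{1..j}. \<psi> j' \<mu> = \<psi> j \<mu>})} = {\<mu>. \<psi> j \<mu> \<noteq> -\<infinity>}"
  proof (intro set_eqI iffI)
    fix \<mu> assume "\<mu> \<in> {\<mu>::real. ext_minf (\<phi> 1) (\<psi> j \<mu>) > ereal \<mu> \<or>
      (ext_minf (\<phi> 1) (\<psi> j \<mu>) = ereal \<mu> \<and>
        card {i'\<in>{1..1}. ext_minf (\<phi> i') (\<psi> j \<mu>) = ereal \<mu>}
          \<le> card {j'\<in>{1..j}. \<psi> j' \<mu> = \<psi> j \<mu>})}"
    then show "\<mu> \<in> {\<mu>. \<psi> j \<mu> \<noteq> -\<infinity>}" unfolding ext_minf_def by auto
  next
    fix \<mu> assume "\<mu> \<in> {\<mu>. \<psi> j \<mu> \<noteq> -\<infinity>}"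
    then have a: "\<psi> j \<mu> \<noteq> -\<infinity>" by simp
    define z where "z = real_of_ereal (\<psi> j \<mu>)"
    have e: "\<psi> j \<mu> = ereal z" using psi_fin[OF j a] unfolding z_def .
    obtain i where i: "i \<in> {1..d}" "\<phi> i z = ereal \<mu>" using exists_phi[OF j e] by blast
    have "\<phi> i z \<le> \<phi> 1 z" using phi_chain[of 1 i d] i(1) by (intro phi_chain) auto
    then have le: "ereal \<mu> \<le> ext_minf (\<phi> 1) (\<psi> j \<mu>)" using i(2) e unfolding ext_minf_def by simp
    have c1: "card {i'\<in>{1..1::nat}. ext_minf (\<phi> i') (\<psi> j \<mu>) = ereal \<mu>} \<le> 1"
    proof -
      have "card {i'\<in>{1..1::nat}. ext_minf (\<phi> i') (\<psi> j \<mu>) = ereal \<mu>} \<le> card {1..1::nat}"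
        by (rule card_mono) auto
      then show ?thesis by simp
    qed
    have "j \<in> {j'\<in>{1..j}. \<psi> j' \<mu> = \<psi> j \<mu>}" using j by simp
    then have "card {j'\<in>{1..j}. \<psi> j' \<mu> = \<psi> j \<mu>} > 0" by (intro card_gt_0_iff[THEN iffD2]) auto
    then have c2: "1 \<le> card {j'\<in>{1..j}. \<psi> j' \<mu> = \<psi> j \<mu>}" by simp
    show "\<mu> \<in> {\<mu>::real. ext_minf (\<phi> 1) (\<psi> j \<mu>) > ereal \<mu> \<or>
      (ext_minf (\<phi> 1) (\<psi> j \<mu>) = ereal \<mu> \<and>
        card {i'\<in>{1..1}. ext_minf (\<phi> i') (\<psi> j \<mu>) = ereal \<mu>}
          \<le> card {j'\<in>{1..j}. \<psi> j' \<mu> = \<psi> j \<mu>})}"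
      using le c1 c2 by (auto simp: le_less)
  qed
  then show ?thesis unfolding mu1_def r_def by simp
qed

lemma downset:
  assumes "A \<subseteq> {1..(d::nat)}" "\<forall>a\<in>A. \<forall>a'. 1 \<le> a' \<and> a' \<le> a \<longrightarrow> a' \<in> A"
  shows "A = {1..card A}"
proof (cases "A = {}")
  case True then show ?thesis by simp
next
  case False
  have fA: "finite A" using assms(1) finite_subset by blast
  define m where "m = Max A"
  have mA: "m \<in> A" unfolding m_def using fA False by simp
  have "A = {1..m}"
  proof
    show "A \<subseteq> {1..m}" using assms(1) fA unfolding m_def by auto
    show "{1..m} \<subseteq> A" using assms(2) mA by auto
  qed
  then show ?thesis by simp
qed

lemma Zset: "{j\<in>{1..d}. \<psi> j \<mu> = -\<infinity>} = {1..card {i\<in>{1..d}. ereal \<mu> \<notin> range (\<phi> i)}}"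
proof -
  define A where "A = {j\<in>{1..d}. \<psi> j \<mu> = -\<infinity>}"
  have "A = {1..card A}"
  proof (rule downset)
    show "A \<subseteq> {1..d}" unfolding A_def by auto
    show "\<forall>a\<in>A. \<forall>a'. 1 \<le> a' \<and> a' \<le> a \<longrightarrow> a' \<in> A"
    proof (intro ballI allI impI)
      fix a a' assume "a \<in> A" "1 \<le> a' \<and> a' \<le> a"
      then have "\<psi> a' \<mu> \<le> \<psi> a \<mu>" "\<psi> a \<mu> = -\<infinity>" "a' \<in> {1..d}"
        using psi_chain[of a' a \<mu>] unfolding A_def by auto
      then show "a' \<in> A" unfolding A_def by auto
    qed
  qed
  moreover have "card A = card {i\<in>{1..d}. ereal \<mu> \<notin> range (\<phi> i)}"
    using card_split[of "\<lambda>j. \<psi> j \<mu> \<noteq> -\<infinity>"] card_split[of "\<lambda>i. ereal \<mu> \<in> range (\<phi> i)"] CNT[of \<mu>]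
    unfolding A_def by simp
  ultimately show ?thesis unfolding A_def by simp
qed

lemma JUMP:
  assumes "\<forall>\<^sub>F \<mu> in at_left l. \<not> ({i\<in>{1..d}. ereal l \<in> range (\<phi> i)} \<subseteq> {i\<in>{1..d}. ereal \<mu> \<in> range (\<phi> i)})"
  shows "\<exists>i\<in>{1..d}. ereal l \<in> range (\<phi> i) \<and> \<not> (\<forall>\<^sub>F \<mu> in at_left l. ereal \<mu> \<in> range (\<phi> i))"
proof (rule ccontr)
  assume "\<not> ?thesis"
  then have "\<forall>i\<in>{i\<in>{1..d}. ereal l \<in> range (\<phi> i)}. \<forall>\<^sub>F \<mu> in at_left l. ereal \<mu> \<in> range (\<phi> i)" by auto
  then have "\<forall>\<^sub>F \<mu> in at_left l. \<forall>i\<in>{i\<in>{1..d}. ereal l \<in> range (\<phi> i)}. ereal \<mu> \<in> range (\<phi> i)"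
    by (intro eventually_ball_finite) auto
  with assms have "\<forall>\<^sub>F \<mu> in at_left l. False"
    by eventually_elim auto
  then show False by simp
qed

lemma STARTZ:
  assumes i: "i \<in> {1..d}" and l: "ereal l \<in> range (\<phi> i)" and ne: "\<not> (\<forall>\<^sub>F \<mu> in at_left l. ereal \<mu> \<in> range (\<phi> i))"
  shows "\<exists>x. real_of_int (qi i) \<le> x \<and> Fr (\<phi> i) x = l \<and> (\<exists>k::int. x = of_int k / real b)"
proof -
  obtain x :: real where x: "x \<ge> qi i" "Fr (\<phi> i) x = l" using pf.range_iff[OF PF[OF i]] l by blast
  have "\<exists>k::int. x = of_int k / real b"
  proof (cases "x = qi i")
    case True then show ?thesis using bpos by (intro exI[of _ "int b * qi i"]) simp
  next
    case False
    then have xq: "qi i < x" using x by simp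
    show ?thesis
    proof (cases "isCont (\<phi> i) x")
      case True
      then show ?thesis using pf.START[OF PF[OF i] xq True] x ne by simp
    next
      case False then show ?thesis using disc[OF i] by blast
    qed
  qed
  then show ?thesis using x by blast
qed

lemma Nmono: "\<mu> \<le> l \<Longrightarrow> card {i\<in>{1..d}. ereal \<mu> \<in> range (\<phi> i)} \<le> card {i\<in>{1..d}. ereal l \<in> range (\<phi> i)}"
proof -
  assume a: "\<mu> \<le> l"
  have "{j\<in>{1..d}. \<psi> j \<mu> \<noteq> -\<infinity>} \<subseteq> {j\<in>{1..d}. \<psi> j l \<noteq> -\<infinity>}"
    using psi_mono[OF _ a] by fastforce
  then have "card {j\<in>{1..d}. \<psi> j \<mu> \<noteq> -\<infinity>} \<le> card {j\<in>{1..d}. \<psi> j l \<noteq> -\<infinity>}"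
    by (intro card_mono) auto
  then show ?thesis using CNT by simp
qed

end


context mainloc begin

lemma bx_int: "x = of_int k / real b \<Longrightarrow> real b * x = of_int k"
  using bpos by simp

lemma VAL:
  assumes i: "i \<in> {1..d}" and xk: "\<exists>k::int. x = of_int k / real b" and xq: "real_of_int (qi i) \<le> x"
  shows "Fr (\<phi> i) x \<in> \<int>"
proof (rule ccontr)
  assume nint: "Fr (\<phi> i) x \<notin> \<int>"
  define Y where "Y = {(i,x). i \<in> {1..d} \<and> (\<exists>k::int. x = of_int k / real b) \<and> real_of_int (qi i) \<le> x \<and> Fr (\<phi> i) x \<notin> \<int>}"
  have iY: "(i, x) \<in> Y" unfolding Y_def using i xk xq nint by simp
  have Ysub: "Y \<subseteq> (\<Union>i\<in>{1..d}. (\<lambda>k. (i, of_int k / real b)) ` {int b * qi i .. \<lfloor>real b * Qi i\<rfloor>})"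
  proof
    fix p assume "p \<in> Y"
    then obtain i x k where p: "p = (i, x)" "i \<in> {1..d}" "x = of_int k / real b" "real_of_int (qi i) \<le> x" "Fr (\<phi> i) x \<notin> \<int>"
      unfolding Y_def by blast
    have bxk: "real b * x = of_int k" using p(3) bx_int by simp
    have "x < Qi i"
    proof (rule ccontr)
      assume "\<not> x < Qi i"
      then have "Fr (\<phi> i) x = real b * x - qi i" using pf.tailF[OF PF[OF p(2)]] by simp
      then have "Fr (\<phi> i) x = of_int (k - qi i)" using bxk by simp
      then show False using p(5) by (metis Ints_of_int)
    qed
    then have "real b * x < real b * Qi i" using bpos by simp
    then have k2: "k \<le> \<lfloor>real b * Qi i\<rfloor>" using bxk by (simp add: le_floor_iff)
    have "real b * qi i \<le> real b * x" using p(4) bpos by simp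
    then have k1: "int b * qi i \<le> k" using bxk by (metis of_int_le_iff of_int_mult of_int_of_nat_eq)
    show "p \<in> (\<Union>i\<in>{1..d}. (\<lambda>k. (i, of_int k / real b)) ` {int b * qi i .. \<lfloor>real b * Qi i\<rfloor>})"
    proof (rule UN_I[OF p(2)])
      show "p \<in> (\<lambda>k. (i, of_int k / real b)) ` {int b * qi i .. \<lfloor>real b * Qi i\<rfloor>}"
        using p(1,3) k1 k2 by (intro image_eqI[of _ _ k]) auto
    qed
  qed
  have fY: "finite Y" by (rule finite_subset[OF Ysub]) auto
  define V where "V = (\<lambda>(i,x). Fr (\<phi> i) x) ` Y"
  have fV: "finite V" "V \<noteq> {}" unfolding V_def using fY iY by auto
  define m where "m = Max V"
  have "m \<in> V" unfolding m_def using fV by simp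
  then obtain i0 x0 where p0: "(i0, x0) \<in> Y" "Fr (\<phi> i0) x0 = m" unfolding V_def by auto
  from p0(1) obtain k0 where i0: "i0 \<in> {1..d}" "x0 = of_int k0 / real b" "real_of_int (qi i0) \<le> x0" "Fr (\<phi> i0) x0 \<notin> \<int>"
    unfolding Y_def by blast
  have G0: "Fr (\<phi> i0) x0 - real b * x0 \<notin> \<int>"
  proof
    assume "Fr (\<phi> i0) x0 - real b * x0 \<in> \<int>"
    then have "Fr (\<phi> i0) x0 - real b * x0 + of_int k0 \<in> \<int>" by (intro Ints_add) auto
    then show False using i0(4) bx_int[OF i0(2)] by simp
  qed
  then obtain t where t: "x0 < t" "Fr (\<phi> i0) x0 - real b * x0 + real b * t \<notin> \<int>"
     "ereal (Fr (\<phi> i0) x0 - real b * x0 + real b * t) \<notin> range (\<phi> i0)"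
     "\<forall>\<^sub>F \<mu> in at_left (Fr (\<phi> i0) x0 - real b * x0 + real b * t). ereal \<mu> \<in> range (\<phi> i0)"
    using pf.GAP[OF PF[OF i0(1)] i0(3) G0 Ints_of_int disc[OF i0(1)]] by blast
  define l where "l = Fr (\<phi> i0) x0 - real b * x0 + real b * t"
  have lm: "l > m" unfolding l_def using t(1) bpos p0(2) by simp
  have "\<forall>\<^sub>F \<mu> in at_left l. \<not> ({i\<in>{1..d}. ereal l \<in> range (\<phi> i)} \<subseteq> {i\<in>{1..d}. ereal \<mu> \<in> range (\<phi> i)})"
    using t(4)[folded l_def] ev_left_less[of l]
  proof eventually_elim
    case (elim \<mu>)
    show ?case
    proof
      assume sub: "{i\<in>{1..d}. ereal l \<in> range (\<phi> i)} \<subseteq> {i\<in>{1..d}. ereal \<mu> \<in> range (\<phi> i)}"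
      have "i0 \<in> {i\<in>{1..d}. ereal \<mu> \<in> range (\<phi> i)}" "i0 \<notin> {i\<in>{1..d}. ereal l \<in> range (\<phi> i)}"
        using elim i0(1) t(3)[folded l_def] by auto
      then have "card {i\<in>{1..d}. ereal l \<in> range (\<phi> i)} < card {i\<in>{1..d}. ereal \<mu> \<in> range (\<phi> i)}"
        using sub by (intro psubset_card_mono) auto
      moreover have "card {i\<in>{1..d}. ereal \<mu> \<in> range (\<phi> i)} \<le> card {i\<in>{1..d}. ereal l \<in> range (\<phi> i)}"
        using Nmono elim by simp
      ultimately show False by simp
    qed
  qed
  from JUMP[OF this] obtain i1 where i1: "i1 \<in> {1..d}" "ereal l \<in> range (\<phi> i1)"
    "\<not> (\<forall>\<^sub>F \<mu> in at_left l. ereal \<mu> \<in> range (\<phi> i1))" by blast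
  obtain x1 where x1: "real_of_int (qi i1) \<le> x1" "Fr (\<phi> i1) x1 = l" "\<exists>k::int. x1 = of_int k / real b"
    using STARTZ[OF i1] by blast
  have "(i1, x1) \<in> Y" unfolding Y_def using i1(1) x1 t(2)[folded l_def] by simp
  then have "l \<in> V" unfolding V_def using x1(2) by force
  then have "l \<le> m" unfolding m_def using fV by simp
  then show False using lm by simp
qed

lemma r_int: assumes j: "j \<in> {1..d}" shows "r j \<in> \<int>"
proof -
  define l where "l = r j"
  have rp: "\<And>\<mu>. \<psi> j \<mu> \<noteq> -\<infinity> \<longleftrightarrow> l \<le> \<mu>" using r_props[OF j] unfolding l_def by blast
  have "\<forall>\<^sub>F \<mu> in at_left l. \<not> ({i\<in>{1..d}. ereal l \<in> range (\<phi> i)} \<subseteq> {i\<in>{1..d}. ereal \<mu> \<in> range (\<phi> i)})"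
    using ev_left_less[of l]
  proof eventually_elim
    case (elim \<mu>)
    have "{j'\<in>{1..d}. \<psi> j' \<mu> \<noteq> -\<infinity>} \<subseteq> {j'\<in>{1..d}. \<psi> j' l \<noteq> -\<infinity>}"
    proof
      fix j' assume a: "j' \<in> {j'\<in>{1..d}. \<psi> j' \<mu> \<noteq> -\<infinity>}"
      then have "\<psi> j' \<mu> \<le> \<psi> j' l" using psi_mono[of j' \<mu> l] elim by simp
      then show "j' \<in> {j'\<in>{1..d}. \<psi> j' l \<noteq> -\<infinity>}" using a by (metis (mono_tags, lifting) ereal_infty_less_eq(2) mem_Collect_eq)
    qed
    moreover have "j \<in> {j'\<in>{1..d}. \<psi> j' l \<noteq> -\<infinity>}" "j \<notin> {j'\<in>{1..d}. \<psi> j' \<mu> \<noteq> -\<infinity>}"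
      using rp[of l] rp[of \<mu>] elim j by auto
    ultimately have "card {j'\<in>{1..d}. \<psi> j' \<mu> \<noteq> -\<infinity>} < card {j'\<in>{1..d}. \<psi> j' l \<noteq> -\<infinity>}"
      by (intro psubset_card_mono) auto
    then have lt: "card {i\<in>{1..d}. ereal \<mu> \<in> range (\<phi> i)} < card {i\<in>{1..d}. ereal l \<in> range (\<phi> i)}"
      using CNT by simp
    show ?case
    proof
      assume "{i\<in>{1..d}. ereal l \<in> range (\<phi> i)} \<subseteq> {i\<in>{1..d}. ereal \<mu> \<in> range (\<phi> i)}"
      then have "card {i\<in>{1..d}. ereal l \<in> range (\<phi> i)} \<le> card {i\<in>{1..d}. ereal \<mu> \<in> range (\<phi> i)}"
        by (intro card_mono) auto
      then show False using lt by simp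
    qed
  qed
  from JUMP[OF this] obtain i where i: "i \<in> {1..d}" "ereal l \<in> range (\<phi> i)"
    "\<not> (\<forall>\<^sub>F \<mu> in at_left l. ereal \<mu> \<in> range (\<phi> i))" by blast
  obtain x where x: "real_of_int (qi i) \<le> x" "Fr (\<phi> i) x = l" "\<exists>k::int. x = of_int k / real b"
    using STARTZ[OF i] by blast
  show ?thesis using VAL[OF i(1) x(3) x(1)] x(2) unfolding l_def by simp
qed

end



lemma gauss_real: "(\<Sum>j\<in>{1..m}. real j) = real m * (real m + 1) / 2"
  by (induction m) (auto simp: field_simps)

lemma sum_ind_card: "(\<Sum>i\<in>{1..n::nat}. if P i then 1 else (0::real)) = real (card {i\<in>{1..n}. P i})"
  using sum.inter_filter[of "{1..n}" "\<lambda>_. (1::real)" P] by simp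

lemma comb:
  "real (card {i\<in>{1..n::nat}. z i}) * (real (card {i\<in>{1..n}. z i}) + 1) / 2
     + (\<Sum>i\<in>{1..n}. \<Sum>i'\<in>{i<..n}. if z i \<and> \<not> z i' then 1 else (0::real))
   = (\<Sum>i\<in>{1..n}. if z i then real (n + 1 - i) else 0)"
proof (induction n)
  case 0 then show ?case by simp
next
  case (Suc n)
  define c where "c = card {i\<in>{1..n}. z i}"
  have cS: "real (card {i\<in>{1..Suc n}. z i}) = real c + (if z (Suc n) then 1 else 0)"
  proof -
    have "(\<Sum>i\<in>{1..Suc n}. if z i then 1 else (0::real)) = (\<Sum>i\<in>{1..n}. if z i then 1 else (0::real)) + (if z (Suc n) then 1 else 0)"
      by (simp add: sum.cl_ivl_Suc)
    then show ?thesis using sum_ind_card[where n="Suc n" and P=z] sum_ind_card[where n=n and P=z] unfolding c_def by simp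
  qed
  have inner: "(\<Sum>i'\<in>{i<..Suc n}. if z i \<and> \<not> z i' then 1 else (0::real)) =
      (\<Sum>i'\<in>{i<..n}. if z i \<and> \<not> z i' then 1 else (0::real)) + (if z i \<and> \<not> z (Suc n) then 1 else 0)"
    if "i \<in> {1..n}" for i
  proof -
    have "{i<..Suc n} = insert (Suc n) {i<..n}" using that by auto
    then show ?thesis by (simp add: add.commute)
  qed
  have inv: "(\<Sum>i\<in>{1..Suc n}. \<Sum>i'\<in>{i<..Suc n}. if z i \<and> \<not> z i' then 1 else (0::real)) =
     (\<Sum>i\<in>{1..n}. \<Sum>i'\<in>{i<..n}. if z i \<and> \<not> z i' then 1 else (0::real)) + (if z (Suc n) then 0 else real c)"
  proof -
    have "(\<Sum>i\<in>{1..Suc n}. \<Sum>i'\<in>{i<..Suc n}. if z i \<and> \<not> z i' then 1 else (0::real)) =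
        (\<Sum>i\<in>{1..n}. \<Sum>i'\<in>{i<..Suc n}. if z i \<and> \<not> z i' then 1 else (0::real))"
      by (simp add: sum.cl_ivl_Suc)
    also have "\<dots> = (\<Sum>i\<in>{1..n}. (\<Sum>i'\<in>{i<..n}. if z i \<and> \<not> z i' then 1 else (0::real)) + (if z i \<and> \<not> z (Suc n) then 1 else 0))"
      by (rule sum.cong[OF refl]) (rule inner)
    also have "\<dots> = (\<Sum>i\<in>{1..n}. \<Sum>i'\<in>{i<..n}. if z i \<and> \<not> z i' then 1 else (0::real)) + (\<Sum>i\<in>{1..n}. if z i \<and> \<not> z (Suc n) then 1 else (0::real))"
      by (rule sum.distrib)
    also have "(\<Sum>i\<in>{1..n}. if z i \<and> \<not> z (Suc n) then 1 else (0::real)) = (if z (Suc n) then 0 else real c)"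
      using sum_ind_card[where n=n and P=z] unfolding c_def by auto
    finally show ?thesis .
  qed
  have rhs: "(\<Sum>i\<in>{1..Suc n}. if z i then real (Suc n + 1 - i) else 0) =
     (\<Sum>i\<in>{1..n}. if z i then real (n + 1 - i) else 0) + real c + (if z (Suc n) then 1 else 0)"
  proof -
    have "(\<Sum>i\<in>{1..Suc n}. if z i then real (Suc n + 1 - i) else 0) =
       (\<Sum>i\<in>{1..n}. if z i then real (Suc n + 1 - i) else 0) + (if z (Suc n) then 1 else 0)"
      by (simp add: sum.cl_ivl_Suc)
    also have "(\<Sum>i\<in>{1..n}. if z i then real (Suc n + 1 - i) else 0) =
       (\<Sum>i\<in>{1..n}. (if z i then real (n + 1 - i) else 0) + (if z i then 1 else 0))"
      by (rule sum.cong) (auto simp: of_nat_diff)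
    also have "\<dots> = (\<Sum>i\<in>{1..n}. if z i then real (n + 1 - i) else 0) + real c"
      using sum_ind_card[where n=n and P=z] unfolding sum.distrib c_def by simp
    finally show ?thesis .
  qed
  show ?case
    using Suc.IH unfolding cS inv rhs c_def[symmetric]
    by (cases "z (Suc n)") (simp_all add: field_simps)
qed

context mainloc begin

definition A where "A i = {\<mu>. LL \<le> \<mu> \<and> \<mu> < MM \<and> ereal \<mu> \<notin> range (\<phi> i)}"
definition B where "B j = {\<mu>. LL \<le> \<mu> \<and> \<mu> < MM \<and> \<psi> j \<mu> = -\<infinity>}"
definition P where "P i i' = {\<mu>. ereal \<mu> \<in> range (\<phi> i') \<and> ereal \<mu> \<notin> range (\<phi> i)}"

lemma A_meas:
  assumes i: "i \<in> {1..d}"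
  shows "A i \<in> sets lebesgue \<and> emeasure lebesgue (A i) < \<infinity> \<and> measure lebesgue (A i) = (real b - 1) * qi i - LL"
proof -
  define Y where "Y = (MM + qi i) / real b"
  have bY: "real b * Y - qi i = MM" unfolding Y_def using bpos by simp
  have YQ: "Y \<ge> Qi i" using MM_ge[OF i] bpos unfolding Y_def by (simp add: field_simps)
  have qY: "qi i \<le> Y" using pf.Qq[OF PF[OF i]] YQ by simp
  have Img: "{\<mu>. ereal \<mu> \<in> range (\<phi> i) \<and> \<mu> < MM} = ImgF (\<phi> i) (qi i) Y"
    using pf.range_Img[OF PF[OF i] YQ] bY by simp
  have IM: "ImgF (\<phi> i) (qi i) Y \<in> sets lebesgue" "emeasure lebesgue (ImgF (\<phi> i) (qi i) Y) = ennreal (real b * (Y - qi i))"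
    using pf.IMG[OF PF[OF i] order.refl qY] by auto
  have mI: "measure lebesgue (ImgF (\<phi> i) (qi i) Y) = real b * (Y - qi i)"
    unfolding measure_def IM(2) using qY by simp
  have sub: "ImgF (\<phi> i) (qi i) Y \<subseteq> {LL..<MM}" using Img[symmetric] rangeL[OF i] by auto
  have Aeq: "A i = {LL..<MM} - ImgF (\<phi> i) (qi i) Y" unfolding A_def Img[symmetric] by auto
  have s: "A i \<in> sets lebesgue" unfolding Aeq by (intro sets.Diff) (use IM in auto)
  have "emeasure lebesgue (A i) \<le> emeasure lebesgue {LL..<MM}" unfolding Aeq
    by (rule emeasure_mono) (use IM in auto)
  then have e: "emeasure lebesgue (A i) < \<infinity>" using LM by (simp add: le_less_trans)
  have fin: "emeasure lebesgue {LL..<MM} \<noteq> \<infinity>" using LM by simp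
  have "measure lebesgue (A i) = measure lebesgue {LL..<MM} - measure lebesgue (ImgF (\<phi> i) (qi i) Y)"
    unfolding Aeq by (rule measure_Diff[OF fin]) (use IM sub in auto)
  also have "\<dots> = (MM - LL) - real b * (Y - qi i)" using LM mI by simp
  also have "\<dots> = (real b - 1) * qi i - LL" using bY by (simp add: algebra_simps)
  finally show ?thesis using s e by simp
qed

lemma B_eq: assumes j: "j \<in> {1..d}" shows "B j = {LL..<r j}"
proof -
  have h: "\<psi> j \<mu> = -\<infinity> \<longleftrightarrow> \<mu> < r j" for \<mu> using r_props[OF j] by (meson not_le)
  have "r j \<le> MM" using r_props[OF j] by simp
  then show ?thesis unfolding B_def h by auto
qed

lemma P_eq: assumes i: "i \<in> {1..d}" "i' \<in> {1..d}" shows "P i i' = A i - A i'"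
proof (intro set_eqI iffI)
  fix \<mu> assume "\<mu> \<in> P i i'"
  then have a: "ereal \<mu> \<in> range (\<phi> i')" "ereal \<mu> \<notin> range (\<phi> i)" unfolding P_def by auto
  have "LL \<le> \<mu>" using rangeL[OF i(2) a(1)] .
  moreover have "\<mu> < MM" using rangeM[OF i(1)] a(2) by (meson not_le)
  ultimately show "\<mu> \<in> A i - A i'" using a unfolding A_def by auto
next
  fix \<mu> assume "\<mu> \<in> A i - A i'"
  then show "\<mu> \<in> P i i'" unfolding A_def P_def by auto
qed

lemma P_meas: "i \<in> {1..d} \<Longrightarrow> i' \<in> {1..d} \<Longrightarrow> P i i' \<in> sets lebesgue \<and> emeasure lebesgue (P i i') < \<infinity>"
proof -
  assume i: "i \<in> {1..d}" "i' \<in> {1..d}"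
  have "emeasure lebesgue (P i i') \<le> emeasure lebesgue (A i)"
    unfolding P_eq[OF i] by (rule emeasure_mono) (use A_meas[OF i(1)] in auto)
  then show ?thesis unfolding P_eq[OF i] using A_meas[OF i(1)] A_meas[OF i(2)] by (auto simp: le_less_trans)
qed

lemma pointwise:
  "(\<Sum>j\<in>{1..d}. real j * indicator (B j) \<mu>) + (\<Sum>i\<in>{1..d}. \<Sum>i'\<in>{i<..d}. indicator (P i i') \<mu>)
   = (\<Sum>i\<in>{1..d}. real (d + 1 - i) * indicator (A i) \<mu>)"
proof (cases "LL \<le> \<mu> \<and> \<mu> < MM")
  case False
  have hB0: "indicator (B j) \<mu> = (0::real)" for j using False unfolding B_def indicator_def by auto
  have hA0: "indicator (A i) \<mu> = (0::real)" for i using False unfolding A_def indicator_def by auto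
  have hP0: "indicator (P i i') \<mu> = (0::real)" if "i \<in> {1..d}" "i' \<in> {1..d}" for i i'
    using False that unfolding P_eq[OF that] A_def indicator_def by auto
  have s1: "(\<Sum>j\<in>{1..d}. real j * indicator (B j) \<mu>) = 0" by (simp only: hB0 mult_zero_right sum.neutral_const)
  have s2: "(\<Sum>i\<in>{1..d}. real (d + 1 - i) * indicator (A i) \<mu>) = 0" by (simp only: hA0 mult_zero_right sum.neutral_const)
  have s3: "(\<Sum>i\<in>{1..d}. \<Sum>i'\<in>{i<..d}. indicator (P i i') \<mu>) = (0::real)"
  proof (intro sum.neutral ballI)
    fix i i' assume "i \<in> {1..d}" "i' \<in> {i<..d}"
    then show "indicator (P i i') \<mu> = (0::real)" by (intro hP0) auto
  qed
  show ?thesis unfolding s1 s2 s3 by simp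
next
  case True
  define z where "z i = (ereal \<mu> \<notin> range (\<phi> i))" for i
  define Zc where "Zc = card {i\<in>{1..d}. z i}"
  have "card {i\<in>{1..d}. z i} \<le> card {1..d}" by (rule card_mono) auto
  then have Zd: "Zc \<le> d" unfolding Zc_def by simp
  have hA: "real (d + 1 - i) * indicator (A i) \<mu> = (if z i then real (d + 1 - i) else 0)" for i
    using True unfolding A_def z_def by simp
  have hP: "indicator (P i i') \<mu> = (if z i \<and> \<not> z i' then 1 else (0::real))" for i i'
    unfolding P_def z_def by simp
  have Zs: "{j\<in>{1..d}. \<psi> j \<mu> = -\<infinity>} = {1..Zc}" using Zset[of \<mu>] unfolding Zc_def z_def .
  have hB: "real j * indicator (B j) \<mu> = (if j \<in> {1..Zc} then real j else 0)" if "j \<in> {1..d}" for j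
  proof -
    have mem: "\<psi> j \<mu> = -\<infinity> \<longleftrightarrow> j \<in> {1..Zc}" using Zs that by blast
    show ?thesis using True mem unfolding B_def indicator_def by simp
  qed
  have "(\<Sum>j\<in>{1..d}. real j * indicator (B j) \<mu>) = (\<Sum>j\<in>{1..d}. if j \<in> {1..Zc} then real j else 0)"
    by (rule sum.cong) (auto simp: hB)
  also have "\<dots> = (\<Sum>j\<in>{j\<in>{1..d}. j \<in> {1..Zc}}. real j)" by (rule sum.inter_filter[symmetric]) simp
  also have "{j\<in>{1..d}. j \<in> {1..Zc}} = {1..Zc}" using Zd by auto
  also have "(\<Sum>j\<in>{1..Zc}. real j) = real Zc * (real Zc + 1) / 2" by (rule gauss_real)
  finally have 1: "(\<Sum>j\<in>{1..d}. real j * indicator (B j) \<mu>) = real Zc * (real Zc + 1) / 2" .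
  have c: "real Zc * (real Zc + 1) / 2 + (\<Sum>i\<in>{1..d}. \<Sum>i'\<in>{i<..d}. if z i \<and> \<not> z i' then 1 else (0::real))
     = (\<Sum>i\<in>{1..d}. if z i then real (d + 1 - i) else 0)"
    using comb[of d z] unfolding Zc_def .
  show ?thesis unfolding 1 hA hP by (rule c)
qed

end


context mainloc begin

lemma sum_rev: "(\<Sum>j\<in>{1..d}. real j) = (\<Sum>i\<in>{1..d}. real (d + 1 - i))"
  using sum.atLeastAtMost_rev[of real 1 d] by simp

lemma key: "dim_phi d \<phi> + (\<Sum>j\<in>{1..d}. real j * r j) = (real b - 1) * (\<Sum>i\<in>{1..d}. real (d + 1 - i) * qi i)"
proof -
  have intA: "integrable lebesgue (\<lambda>\<mu>. c * indicator (A i) \<mu> :: real)" if "i \<in> {1..d}" for i c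
    using A_meas[OF that] by (intro integrable_mult_right) auto
  have intB: "integrable lebesgue (\<lambda>\<mu>. c * indicator (B j) \<mu> :: real)" if "j \<in> {1..d}" for j c
    unfolding B_eq[OF that] using r_props[OF that] by (intro integrable_mult_right integrable_real_indicator) auto
  have intP: "integrable lebesgue (\<lambda>\<mu>. indicator (P i i') \<mu> :: real)" if "i \<in> {1..d}" "i' \<in> {1..d}" for i i'
    using P_meas[OF that] by auto
  have IA: "integral\<^sup>L lebesgue (\<lambda>\<mu>. \<Sum>i\<in>{1..d}. real (d + 1 - i) * indicator (A i) \<mu>)
      = (\<Sum>i\<in>{1..d}. real (d + 1 - i) * measure lebesgue (A i))"
  proof -
    have "integral\<^sup>L lebesgue (\<lambda>\<mu>. \<Sum>i\<in>{1..d}. real (d + 1 - i) * indicator (A i) \<mu>)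
       = (\<Sum>i\<in>{1..d}. integral\<^sup>L lebesgue (\<lambda>\<mu>. real (d + 1 - i) * indicator (A i) \<mu> :: real))"
      by (rule Bochner_Integration.integral_sum) (rule intA)
    then show ?thesis by (simp add: integral_mult_right_zero)
  qed
  have IB: "integral\<^sup>L lebesgue (\<lambda>\<mu>. \<Sum>j\<in>{1..d}. real j * indicator (B j) \<mu>)
      = (\<Sum>j\<in>{1..d}. real j * measure lebesgue (B j))"
  proof -
    have "integral\<^sup>L lebesgue (\<lambda>\<mu>. \<Sum>j\<in>{1..d}. real j * indicator (B j) \<mu>)
       = (\<Sum>j\<in>{1..d}. integral\<^sup>L lebesgue (\<lambda>\<mu>. real j * indicator (B j) \<mu> :: real))"
      by (rule Bochner_Integration.integral_sum) (rule intB)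
    then show ?thesis by (simp add: integral_mult_right_zero)
  qed
  have IP: "integral\<^sup>L lebesgue (\<lambda>\<mu>. \<Sum>i\<in>{1..d}. \<Sum>i'\<in>{i<..d}. indicator (P i i') \<mu> :: real)
      = (\<Sum>i\<in>{1..d}. \<Sum>i'\<in>{i<..d}. measure lebesgue (P i i'))"
  proof -
    have "integral\<^sup>L lebesgue (\<lambda>\<mu>. \<Sum>i\<in>{1..d}. \<Sum>i'\<in>{i<..d}. indicator (P i i') \<mu> :: real)
       = (\<Sum>i\<in>{1..d}. integral\<^sup>L lebesgue (\<lambda>\<mu>. \<Sum>i'\<in>{i<..d}. indicator (P i i') \<mu> :: real))"
      by (rule Bochner_Integration.integral_sum) (auto intro!: integrable_sum intP)
    also have "\<dots> = (\<Sum>i\<in>{1..d}. \<Sum>i'\<in>{i<..d}. measure lebesgue (P i i'))"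
    proof (rule sum.cong[OF refl])
      fix i assume i: "i \<in> {1..d}"
      show "integral\<^sup>L lebesgue (\<lambda>\<mu>. \<Sum>i'\<in>{i<..d}. indicator (P i i') \<mu> :: real) = (\<Sum>i'\<in>{i<..d}. measure lebesgue (P i i'))"
      proof -
        have "integral\<^sup>L lebesgue (\<lambda>\<mu>. \<Sum>i'\<in>{i<..d}. indicator (P i i') \<mu> :: real) = (\<Sum>i'\<in>{i<..d}. integral\<^sup>L lebesgue (\<lambda>\<mu>. indicator (P i i') \<mu> :: real))"
          by (rule Bochner_Integration.integral_sum) (use i in \<open>auto intro!: intP\<close>)
        then show ?thesis by simp
      qed
    qed
    finally show ?thesis .
  qed
  have II: "integral\<^sup>L lebesgue (\<lambda>\<mu>. (\<Sum>j\<in>{1..d}. real j * indicator (B j) \<mu>) + (\<Sum>i\<in>{1..d}. \<Sum>i'\<in>{i<..d}. indicator (P i i') \<mu>))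
     = (\<Sum>j\<in>{1..d}. real j * measure lebesgue (B j)) + (\<Sum>i\<in>{1..d}. \<Sum>i'\<in>{i<..d}. measure lebesgue (P i i'))"
  proof -
    have iB: "integrable lebesgue (\<lambda>\<mu>. \<Sum>j\<in>{1..d}. real j * indicator (B j) \<mu> :: real)"
      by (rule Bochner_Integration.integrable_sum) (rule intB)
    have iP: "integrable lebesgue (\<lambda>\<mu>. \<Sum>i\<in>{1..d}. \<Sum>i'\<in>{i<..d}. indicator (P i i') \<mu> :: real)"
    proof (rule Bochner_Integration.integrable_sum)
      fix i assume "i \<in> {1..d}"
      then show "integrable lebesgue (\<lambda>\<mu>. \<Sum>i'\<in>{i<..d}. indicator (P i i') \<mu> :: real)"
        by (intro Bochner_Integration.integrable_sum intP) auto
    qed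
    show ?thesis unfolding Bochner_Integration.integral_add[OF iB iP] IB IP ..
  qed
  have E: "(\<Sum>j\<in>{1..d}. real j * measure lebesgue (B j)) + (\<Sum>i\<in>{1..d}. \<Sum>i'\<in>{i<..d}. measure lebesgue (P i i'))
      = (\<Sum>i\<in>{1..d}. real (d + 1 - i) * measure lebesgue (A i))"
    using II IA pointwise by simp
  have mB: "(\<Sum>j\<in>{1..d}. real j * measure lebesgue (B j)) = (\<Sum>j\<in>{1..d}. real j * r j) - LL * (\<Sum>j\<in>{1..d}. real j)"
  proof -
    have "(\<Sum>j\<in>{1..d}. real j * measure lebesgue (B j)) = (\<Sum>j\<in>{1..d}. real j * r j - LL * real j)"
      by (rule sum.cong) (use r_props B_eq in \<open>auto simp: algebra_simps\<close>)
    then show ?thesis by (simp add: sum_subtractf sum_distrib_left)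
  qed
  have mA: "(\<Sum>i\<in>{1..d}. real (d + 1 - i) * measure lebesgue (A i))
      = (real b - 1) * (\<Sum>i\<in>{1..d}. real (d + 1 - i) * qi i) - LL * (\<Sum>i\<in>{1..d}. real (d + 1 - i))"
  proof -
    have "(\<Sum>i\<in>{1..d}. real (d + 1 - i) * measure lebesgue (A i)) = (\<Sum>i\<in>{1..d}. (real b - 1) * (real (d + 1 - i) * qi i) - LL * real (d + 1 - i))"
    proof (rule sum.cong[OF refl])
      fix i assume i: "i \<in> {1..d}"
      have aux: "(w::real) * (c * q - L) = c * (w * q) - L * w" for w c q L by (simp add: algebra_simps)
      have "measure lebesgue (A i) = (real b - 1) * qi i - LL" using A_meas[OF i] by simp
      then show "real (d + 1 - i) * measure lebesgue (A i) = (real b - 1) * (real (d + 1 - i) * qi i) - LL * real (d + 1 - i)"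
        using aux by simp
    qed
    then show ?thesis by (simp only: sum_subtractf sum_distrib_left)
  qed
  have dimP: "dim_phi d \<phi> = (\<Sum>i\<in>{1..d}. \<Sum>i'\<in>{i<..d}. measure lebesgue (P i i'))"
    unfolding dim_phi_def P_def ..
  show ?thesis using E mB mA sum_rev dimP by simp
qed

theorem main_loc:
  "dim_phi d \<phi> \<in> \<int> \<and>
    (\<exists>k::int. dim_phi d \<phi> - (- (\<Sum>j=1..d. real j * mu1 d \<phi> \<psi> j)) = of_int k * (real b - 1))"
proof -
  have mu: "(\<Sum>j=1..d. real j * mu1 d \<phi> \<psi> j) = (\<Sum>j\<in>{1..d}. real j * r j)"
    by (rule sum.cong) (auto simp: mu1_eq)
  define K where "K = (\<Sum>i\<in>{1..d}. int (d + 1 - i) * qi i)"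
  have K: "real_of_int K = (\<Sum>i\<in>{1..d}. real (d + 1 - i) * qi i)" unfolding K_def by simp
  have eq: "dim_phi d \<phi> = of_int K * (real b - 1) - (\<Sum>j\<in>{1..d}. real j * r j)"
    using key K by (simp add: algebra_simps)
  have "(\<Sum>j\<in>{1..d}. real j * r j) \<in> \<int>"
    by (intro Ints_sum Ints_mult) (auto intro: r_int)
  then have "dim_phi d \<phi> \<in> \<int>" unfolding eq by (intro Ints_diff Ints_mult) auto
  moreover have "dim_phi d \<phi> - (- (\<Sum>j=1..d. real j * mu1 d \<phi> \<psi> j)) = of_int K * (real b - 1)"
    unfolding mu eq by simp
  ultimately show ?thesis by blast
qed

end


theorem mainTheorem6:
  fixes b d :: nat and \<phi> \<psi> :: "nat \<Rightarrow> real \<Rightarrow> ereal"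
  assumes "b \<ge> 2" and "d \<ge> 1"
    and "Phi_Z b d \<phi>"
    and "conj_family d \<phi> \<psi>"
  shows "dim_phi d \<phi> \<in> \<int> \<and>
    (\<exists>k::int. dim_phi d \<phi> - (- (\<Sum>j=1..d. real j * mu1 d \<phi> \<psi> j)) = of_int k * (real b - 1))"
proof -
  interpret mainloc b d \<phi> \<psi> using assms by unfold_locales
  show ?thesis by (rule main_loc)
qed

end
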